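(* Let $V$ be the complex vector space with basis the Schröder pseudocompositions. For Schröder pseudocompositions $I$ and $J$, write $J=J'0^m$ where $m\ge1$ and $J'$ does not end with $0$, and define $$I\prec J=J'0^{m-1}\cdot I,\qquad I\circ J=(J'\triangleright I)\cdot 0^{m-1},\qquad I\succ J=J'\cdot I\cdot 0^{m-1},$$ extended bilinearly to $V$. Then $(V,\prec,\circ,\succ)$ is a triduplicial algebra, and it is freely generated (as a triduplicial algebra) by the element $x=(1,0,0)$.
   Context: A reduced plane tree is a rooted plane tree in which every internal vertex has at least two children. Its Polish code is the sequence obtained by listing the vertices in preorder (root, then the children's subtrees from left to right, recursively), recording $0$ for a leaf and $k$ for an internal vertex with $k+1$ children. A Schröder pseudocomposition is the Polish code of a reduced plane tree with at least two leaves (such a code always ends with $0$). Here $\cdot$ denotes concatenation of sequences, $0^k$ is the sequence of $k$ zeros, and for $J'=(j_1,\dots,j_s)$, $I=(i_1,\dots,i_r)$, $J'\triangleright I=(j_1,\dots,j_{s-1},j_s+i_1,i_2,\dots,i_r)$. A triduplicial algebra is a vector space with three bilinear operations $\prec,\circ,\succ$ satisfying: $(x\prec y)\prec z=x\prec(y\prec z)$, $(x\circ y)\circ z=x\circ(y\circ z)$, $(x\succ y)\succ z=x\succ(y\succ z)$, $(x\succ y)\prec z=x\succ(y\prec z)$, $(x\circ y)\prec z=x\circ(y\prec z)$, $(x\succ y)\circ z=x\succ(y\circ z)$, $(x\circ y)\succ z=x\circ(y\succ z)$. It is freely generated by $x$ if for every triduplicial algebra $W$ and every $w\in W$ there is a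 unique morphism of triduplicial algebras $V\to W$ sending $x$ to $w$. *)

theory Defs
  imports Complex_Main
begin

datatype ptree = Leaf | Node "ptree list"

fun reduced :: "ptree \<Rightarrow> bool" where
  "reduced Leaf = True"
| "reduced (Node ts) = (length ts \<ge> 2 \<and> (\<forall>t\<in>set ts. reduced t))"

fun leaves :: "ptree \<Rightarrow> nat" where
  "leaves Leaf = 1"
| "leaves (Node ts) = sum_list (map leaves ts)"

fun polish :: "ptree \<Rightarrow> nat list" where
  "polish Leaf = [0]"
| "polish (Node ts) = (length ts - 1) # concat (map polish ts)"

definition schroeder_pc :: "nat list set" where
  "schroeder_pc = {polish t | t. reduced t \<and> leaves t \<ge> 2}"

definition trail_zeros :: "nat list \<Rightarrow> nat" where
  "trail_zeros J = length (takeWhile (\<lambda>a. a = 0) (rev J))"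

definition strip_zeros :: "nat list \<Rightarrow> nat list" where
  "strip_zeros J = rev (dropWhile (\<lambda>a. a = 0) (rev J))"

definition tri_join :: "nat list \<Rightarrow> nat list \<Rightarrow> nat list" where
  "tri_join J' I = butlast J' @ [last J' + hd I] @ tl I"

definition prec_pc :: "nat list \<Rightarrow> nat list \<Rightarrow> nat list" where
  "prec_pc I J = strip_zeros J @ replicate (trail_zeros J - 1) 0 @ I"

definition circ_pc :: "nat list \<Rightarrow> nat list \<Rightarrow> nat list" where
  "circ_pc I J = tri_join (strip_zeros J) I @ replicate (trail_zeros J - 1) 0"

definition succ_pc :: "nat list \<Rightarrow> nat list \<Rightarrow> nat list" where
  "succ_pc I J = strip_zeros J @ I @ replicate (trail_zeros J - 1) 0"

definition Vset :: "(nat list \<Rightarrow> complex) set" where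
  "Vset = {f. finite {I. f I \<noteq> 0} \<and> {I. f I \<noteq> 0} \<subseteq> schroeder_pc}"

definition addV :: "(nat list \<Rightarrow> complex) \<Rightarrow> (nat list \<Rightarrow> complex) \<Rightarrow> nat list \<Rightarrow> complex" where
  "addV f g = (\<lambda>K. f K + g K)"

definition scaleV :: "complex \<Rightarrow> (nat list \<Rightarrow> complex) \<Rightarrow> nat list \<Rightarrow> complex" where
  "scaleV c f = (\<lambda>K. c * f K)"

definition zeroV :: "nat list \<Rightarrow> complex" where
  "zeroV = (\<lambda>K. 0)"

definition basisV :: "nat list \<Rightarrow> nat list \<Rightarrow> complex" where
  "basisV I = (\<lambda>K. if K = I then 1 else 0)"

definition bilin_ext :: "(nat list \<Rightarrow> nat list \<Rightarrow> nat list) \<Rightarrow>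
    (nat list \<Rightarrow> complex) \<Rightarrow> (nat list \<Rightarrow> complex) \<Rightarrow> nat list \<Rightarrow> complex" where
  "bilin_ext b f g = (\<lambda>K. \<Sum>I\<in>{I. f I \<noteq> 0}. \<Sum>J\<in>{J. g J \<noteq> 0}.
      if b I J = K then f I * g J else 0)"

definition precV where "precV = bilin_ext prec_pc"
definition circV where "circV = bilin_ext circ_pc"
definition succV where "succV = bilin_ext succ_pc"

definition tridup_identities :: "'a set \<Rightarrow> ('a \<Rightarrow> 'a \<Rightarrow> 'a) \<Rightarrow> ('a \<Rightarrow> 'a \<Rightarrow> 'a)
    \<Rightarrow> ('a \<Rightarrow> 'a \<Rightarrow> 'a) \<Rightarrow> bool" where
  "tridup_identities A p c s \<longleftrightarrow> (\<forall>x\<in>A. \<forall>y\<in>A. \<forall>z\<in>A.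
      p (p x y) z = p x (p y z) \<and>
      c (c x y) z = c x (c y z) \<and>
      s (s x y) z = s x (s y z) \<and>
      p (s x y) z = s x (p y z) \<and>
      p (c x y) z = c x (p y z) \<and>
      c (s x y) z = s x (c y z) \<and>
      s (c x y) z = c x (s y z))"

definition bilinear_wrt :: "(complex \<Rightarrow> 'w::ab_group_add \<Rightarrow> 'w) \<Rightarrow> ('w \<Rightarrow> 'w \<Rightarrow> 'w) \<Rightarrow> bool" where
  "bilinear_wrt sc op \<longleftrightarrow> (\<forall>y. Vector_Spaces.linear sc sc (\<lambda>x. op x y)) \<and>
                          (\<forall>x. Vector_Spaces.linear sc sc (op x))"

definition triduplicial_algebra ::
  "(complex \<Rightarrow> 'w::ab_group_add \<Rightarrow> 'w) \<Rightarrow> ('w \<Rightarrow> 'w \<Rightarrow> 'w) \<Rightarrow> ('w \<Rightarrow> 'w \<Rightarrow> 'w)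
     \<Rightarrow> ('w \<Rightarrow> 'w \<Rightarrow> 'w) \<Rightarrow> bool" where
  "triduplicial_algebra sc p c s \<longleftrightarrow> vector_space sc \<and>
     bilinear_wrt sc p \<and> bilinear_wrt sc c \<and> bilinear_wrt sc s \<and> tridup_identities UNIV p c s"

definition V_is_triduplicial :: bool where
  "V_is_triduplicial \<longleftrightarrow>
     zeroV \<in> Vset \<and>
     (\<forall>f\<in>Vset. \<forall>g\<in>Vset. addV f g \<in> Vset) \<and>
     (\<forall>c. \<forall>f\<in>Vset. scaleV c f \<in> Vset) \<and>
     (\<forall>op\<in>{precV, circV, succV}.
        (\<forall>f\<in>Vset. \<forall>g\<in>Vset. op f g \<in> Vset) \<and>
        (\<forall>f\<in>Vset. \<forall>g\<in>Vset. \<forall>h\<in>Vset. op (addV f g) h = addV (op f h) (op g h)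
                                   \<and> op h (addV f g) = addV (op h f) (op h g)) \<and>
        (\<forall>c. \<forall>f\<in>Vset. \<forall>g\<in>Vset. op (scaleV c f) g = scaleV c (op f g)
                                \<and> op f (scaleV c g) = scaleV c (op f g))) \<and>
     tridup_identities Vset precV circV succV"

text \<open>Morphisms of triduplicial algebras V \<rightarrow> W (only their values on V matter).\<close>
definition V_morphism ::
  "(complex \<Rightarrow> 'w::ab_group_add \<Rightarrow> 'w) \<Rightarrow> ('w \<Rightarrow> 'w \<Rightarrow> 'w) \<Rightarrow> ('w \<Rightarrow> 'w \<Rightarrow> 'w)
     \<Rightarrow> ('w \<Rightarrow> 'w \<Rightarrow> 'w) \<Rightarrow> ((nat list \<Rightarrow> complex) \<Rightarrow> 'w) \<Rightarrow> bool" where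
  "V_morphism sc p c s \<phi> \<longleftrightarrow>
     (\<forall>f\<in>Vset. \<forall>g\<in>Vset. \<phi> (addV f g) = \<phi> f + \<phi> g) \<and>
     (\<forall>a. \<forall>f\<in>Vset. \<phi> (scaleV a f) = sc a (\<phi> f)) \<and>
     (\<forall>f\<in>Vset. \<forall>g\<in>Vset. \<phi> (precV f g) = p (\<phi> f) (\<phi> g)) \<and>
     (\<forall>f\<in>Vset. \<forall>g\<in>Vset. \<phi> (circV f g) = c (\<phi> f) (\<phi> g)) \<and>
     (\<forall>f\<in>Vset. \<forall>g\<in>Vset. \<phi> (succV f g) = s (\<phi> f) (\<phi> g))"

end

theory Submission
  imports Defs
begin


definition hw :: "nat \<Rightarrow> int" where "hw a = (if a = 0 then -1 else int a)"
definition S :: "nat list \<Rightarrow> int" where "S L = sum_list (map hw L)"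
definition okl :: "nat list \<Rightarrow> bool" where
  "okl L \<longleftrightarrow> S L = -1 \<and> (\<forall>i<length L. S (take i L) \<ge> 0)"

lemma S_simps[simp]: "S [] = 0" "S (a # L) = hw a + S L" "S (L @ M) = S L + S M"
  by (simp_all add: S_def)

lemma hw_ge: "hw a \<ge> -1" by (simp add: hw_def)

lemma okl_nonempty: "okl L \<Longrightarrow> L \<noteq> []"
  by (auto simp: okl_def)

lemma okl_hd: "okl L \<Longrightarrow> length L \<ge> 2 \<Longrightarrow> hd L \<noteq> 0"
  unfolding okl_def
  by (cases L) (auto simp: hw_def split: if_splits dest!: spec[where x=1])

lemma okl_single: "okl [a] \<longleftrightarrow> a = 0"
  by (auto simp: okl_def hw_def)

lemma okl_last: "okl L \<Longrightarrow> last L = 0"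
proof -
  assume a: "okl L"
  hence ne: "L \<noteq> []" by (rule okl_nonempty)
  have L: "L = butlast L @ [last L]" using ne by simp
  have "S (take (length L - 1) L) \<ge> 0" using a ne unfolding okl_def by auto
  hence "S (butlast L) \<ge> 0" by (simp add: butlast_conv_take)
  moreover have "S L = S (butlast L) + hw (last L)" by (subst L) simp
  ultimately have "hw (last L) < 0" using a unfolding okl_def by simp
  thus ?thesis by (simp add: hw_def split: if_splits)
qed

lemma okl_replace:
  assumes a: "okl (Y @ 0 # Z)" and b: "okl I"
  shows "okl (Y @ I @ Z)"
proof -
  have SY: "S Y \<ge> 0" using a unfolding okl_def by (auto dest!: spec[where x="length Y"])
  have tot: "S (Y @ I @ Z) = -1" using a b by (simp add: okl_def hw_def)
  have "S (take i (Y @ I @ Z)) \<ge> 0" if i: "i < length (Y @ I @ Z)" for i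
  proof (cases "i \<le> length Y")
    case True
    hence "take i (Y @ I @ Z) = take i (Y @ 0 # Z)" by simp
    moreover have "i < length (Y @ 0 # Z)" using True by simp
    ultimately show ?thesis using a unfolding okl_def by simp
  next
    case F: False
    show ?thesis
    proof (cases "i < length Y + length I")
      case True
      hence "take i (Y @ I @ Z) = Y @ take (i - length Y) I" using F by simp
      moreover have "S (take (i - length Y) I) \<ge> 0" using b True F unfolding okl_def by auto
      ultimately show ?thesis using SY by simp
    next
      case False
      define j where "j = i - length Y - length I"
      have "take i (Y @ I @ Z) = Y @ I @ take j Z" using F False by (simp add: j_def)
      moreover have "take (length Y + 1 + j) (Y @ 0 # Z) = Y @ 0 # take j Z" by simp
      moreover have "length Y + 1 + j < length (Y @ 0 # Z)" using i F False by (simp add: j_def)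
      ultimately show ?thesis using a b unfolding okl_def
        by (auto simp: hw_def dest!: spec[where x="length Y + 1 + j"])
    qed
  qed
  thus ?thesis using tot unfolding okl_def by blast
qed

lemma okl_merge:
  assumes a: "okl (Y @ x # y # Z)" and x: "x > 0" and y: "y > 0"
  shows "okl (Y @ (x + y) # Z)"
proof -
  have tot: "S (Y @ (x + y) # Z) = -1" using a x y by (simp add: okl_def hw_def)
  have "S (take i (Y @ (x + y) # Z)) \<ge> 0" if i: "i < length (Y @ (x + y) # Z)" for i
  proof (cases "i \<le> length Y")
    case True
    hence "take i (Y @ (x + y) # Z) = take i (Y @ x # y # Z)" by simp
    moreover have "i < length (Y @ x # y # Z)" using True by simp
    ultimately show ?thesis using a unfolding okl_def by simp
  next
    case False
    define j where "j = i - length Y - 1"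
    have "take i (Y @ (x + y) # Z) = Y @ (x + y) # take j Z" using False
      by (simp add: j_def) (metis Suc_diff_Suc not_le take_Suc_Cons)
    moreover have "take (length Y + 2 + j) (Y @ x # y # Z) = Y @ x # y # take j Z" by simp
    moreover have "length Y + 2 + j < length (Y @ x # y # Z)" using i False by (simp add: j_def)
    ultimately show ?thesis using a x y unfolding okl_def
      by (auto simp: hw_def dest!: spec[where x="length Y + 2 + j"])
  qed
  thus ?thesis using tot unfolding okl_def by blast
qed

lemma okl_prefix:
  assumes "okl U" "okl V" "U @ X = V @ Y" shows "U = V"
proof -
  have "\<not> length U < length V" if "okl U" "okl V" "U @ X = V @ Y" for U V X Y
  proof
    assume l: "length U < length V"
    have "take (length U) V = U" using that(3) l
      by (metis append_eq_append_conv_if append_take_drop_id less_imp_le_nat take_all_iff take_append)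
    thus False using that(1,2) l unfolding okl_def by auto
  qed
  from this[of U V X Y] this[of V U Y X] assms have "length U = length V" by fastforce
  thus ?thesis using assms(3) by (metis append_eq_append_conv)
qed



lemma S_take_Suc: "i < length K \<Longrightarrow> S (take (Suc i) K) = S (take i K) + hw (K ! i)"
  by (simp add: take_Suc_conv_app_nth)

lemma okl_split:
  assumes ok: "okl K" and len: "length K \<ge> 2"
  shows "\<exists>M T. K = hd K # M @ T \<and> okl T \<and>
     ((hd K = 1 \<and> okl M) \<or> (hd K \<ge> 2 \<and> okl ((hd K - 1) # M)))"
proof -
  define k where "k = hd K"
  have k0: "k \<noteq> 0" using okl_hd[OF ok len] k_def by simp
  obtain R where K: "K = k # R" using len k_def by (cases K) auto
  define P where "P i = S (take i K)" for i
  have Pall: "P i \<ge> 0" if "i < length K" for i using ok that unfolding okl_def P_def by auto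
  have Pend: "P (length K) = -1" using ok unfolding okl_def P_def by simp
  have P1: "P 1 = int k" using k0 by (simp add: P_def K hw_def)
  have step: "P (Suc i) \<ge> P i - 1" if "i < length K" for i
    using S_take_Suc[OF that] hw_ge[of "K!i"] unfolding P_def by simp
  define j where "j = (LEAST i. 1 \<le> i \<and> P i \<le> 0)"
  have ex: "1 \<le> length K \<and> P (length K) \<le> 0" using Pend len by simp
  have j1: "1 \<le> j" and Pj: "P j \<le> 0" using LeastI[of "\<lambda>i. 1 \<le> i \<and> P i \<le> 0", OF ex] j_def by auto
  have jmin: "P i > 0" if "1 \<le> i" "i < j" for i
    using not_less_Least[of i "\<lambda>i. 1 \<le> i \<and> P i \<le> 0"] that j_def by auto
  have jle: "j \<le> length K" using Least_le[of "\<lambda>i. 1 \<le> i \<and> P i \<le> 0", OF ex] j_def by simp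
  have j2: "j \<ge> 2" using j1 Pj P1 k0 by (cases "j = 1") auto
  have Pj0: "P j = 0"
  proof -
    obtain i where i: "j = Suc i" using j1 by (cases j) auto
    have "P i > 0" using jmin[of i] i j2 by simp
    moreover have "P j \<ge> P i - 1" using step[of i] i jle by simp
    ultimately show ?thesis using Pj by simp
  qed
  have jlt: "j < length K" using Pj0 Pend jle by (cases "j = length K") auto
  define M where "M = take (j - 1) R"
  define T where "T = drop (j - 1) R"
  have KMT: "K = k # M @ T" by (simp add: K M_def T_def)
  have lenM: "length M = j - 1" using jlt by (simp add: M_def K)
  have PM: "P (Suc i) = int k + S (take i M)" if "i \<le> j - 1" for i
    using that k0 by (simp add: P_def KMT hw_def lenM)
  have SM: "S M = - int k" using PM[of "j - 1"] Pj0 j1 lenM by simp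
  have okT: "okl T"
  proof -
    have "S T = -1" using Pend Pj0 unfolding P_def KMT by (simp add: hw_def k0 lenM SM)
    moreover have "S (take i T) \<ge> 0" if "i < length T" for i
    proof -
      have "take (Suc (length M) + i) K = k # M @ take i T" by (simp add: KMT)
      hence "P (Suc (length M) + i) = int k + S M + S (take i T)" using k0 by (simp add: P_def hw_def)
      moreover have "Suc (length M) + i < length K" using that KMT by simp
      ultimately show ?thesis using Pall SM by fastforce
    qed
    ultimately show ?thesis unfolding okl_def by blast
  qed
  have Mpre: "int k + S (take i M) \<ge> 1" if "i < length M" for i
  proof -
    have "Suc i < j" using that lenM by simp
    hence "0 < P (Suc i)" using jmin[of "Suc i"] by simp
    moreover have "P (Suc i) = int k + S (take i M)" using PM[of i] that lenM by simp
    ultimately show ?thesis by linarith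
  qed
  show ?thesis
  proof (cases "k = 1")
    case True
    have "S M = -1" using SM True by simp
    moreover have "S (take i M) \<ge> 0" if "i < length M" for i using Mpre[OF that] True by simp
    ultimately have "okl M" unfolding okl_def by blast
    thus ?thesis using KMT okT True unfolding k_def[symmetric] by (intro exI[of _ M] exI[of _ T]) simp
  next
    case False
    have k2: "k \<ge> 2" using False k0 by simp
    have "S ((k - 1) # M) = -1" using SM k2 by (simp add: hw_def)
    moreover have "S (take i ((k - 1) # M)) \<ge> 0" if i: "i < length ((k - 1) # M)" for i
    proof (cases i)
      case 0 then show ?thesis by simp
    next
      case (Suc i')
      have "i' < length M" using i Suc by simp
      hence "int k + S (take i' M) \<ge> 1" by (rule Mpre)
      moreover have "S (take i ((k - 1) # M)) = int (k - 1) + S (take i' M)"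
        using Suc k2 by (simp add: hw_def)
      ultimately show ?thesis using k2 by simp
    qed
    ultimately have "okl ((k - 1) # M)" unfolding okl_def by blast
    thus ?thesis using KMT okT k2 unfolding k_def[symmetric] by (intro exI[of _ M] exI[of _ T]) simp
  qed
qed



lemma okl_x: "okl [1,0,0]"
  unfolding okl_def by (auto simp: hw_def less_Suc_eq)

lemma okl_J1: "okl M \<Longrightarrow> okl T \<Longrightarrow> okl (1 # M @ T)"
proof -
  assume M: "okl M" and T: "okl T"
  have "okl ([1] @ M @ [0])" using okl_replace[of "[1]" "[0]" M] okl_x M by simp
  hence "okl ((1 # M) @ T @ [])" using okl_replace[of "1 # M" "[]" T] T by simp
  thus ?thesis by simp
qed

lemma okl_J2: "a > 0 \<Longrightarrow> okl (a # M) \<Longrightarrow> okl T \<Longrightarrow> okl (Suc a # M @ T)"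
proof -
  assume a: "a > 0" and M: "okl (a # M)" and T: "okl T"
  have "okl ([] @ 1 # a # (M @ T))" using okl_J1[OF M T] by simp
  from okl_merge[OF this] a show ?thesis by simp
qed

lemma okl_cat: "length ts \<ge> 2 \<Longrightarrow> (\<forall>L\<in>set ts. okl L) \<Longrightarrow> okl ((length ts - 1) # concat ts)"
proof (induction ts rule: rev_induct)
  case Nil then show ?case by simp
next
  case (snoc t ts)
  show ?case
  proof (cases "length ts = 1")
    case True
    then obtain u where "ts = [u]" by (cases ts) auto
    then show ?thesis using snoc.prems okl_J1[of u t] by simp
  next
    case False
    hence "length ts \<ge> 2" using snoc.prems by simp
    hence "okl ((length ts - 1) # concat ts)" using snoc by simp
    hence "okl (Suc (length ts - 1) # concat ts @ t)"
      using okl_J2[of "length ts - 1" "concat ts" t] snoc.prems \<open>length ts \<ge> 2\<close> by simp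
    moreover obtain n where "length ts = Suc n" using \<open>length ts \<ge> 2\<close> by (cases "length ts") auto
    ultimately show ?thesis by simp
  qed
qed

lemma polish_ok: "reduced t \<Longrightarrow> okl (polish t)"
proof (induction t)
  case Leaf then show ?case by (simp add: okl_single)
next
  case (Node ts)
  have "okl ((length (map polish ts) - 1) # concat (map polish ts))"
    by (rule okl_cat) (use Node in auto)
  thus ?case by simp
qed

lemma parse: "okl K \<Longrightarrow> \<exists>t. reduced t \<and> polish t = K"
proof (induction "length K" arbitrary: K rule: less_induct)
  case less
  show ?case
  proof (cases "length K \<ge> 2")
    case False
    then obtain a where "K = [a]" using okl_nonempty[OF less.prems]
      by (cases K) (auto simp: Suc_le_eq)
    hence "K = [0]" using less.prems okl_single by simp
    thus ?thesis by (intro exI[of _ Leaf]) simp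
  next
    case True
    from okl_split[OF less.prems True] obtain M T where
      KMT: "K = hd K # M @ T" and T: "okl T" and
      c: "(hd K = 1 \<and> okl M) \<or> (hd K \<ge> 2 \<and> okl ((hd K - 1) # M))" by blast
    have lK: "length K = Suc (length M + length T)" using arg_cong[OF KMT, of length] by simp
    have lT: "length T < length K" using lK by simp
    obtain tT where tT: "reduced tT" "polish tT = T" using less.hyps[OF lT T] by blast
    have Tne: "T \<noteq> []" using okl_nonempty[OF T] .
    from c show ?thesis
    proof
      assume a: "hd K = 1 \<and> okl M"
      have lM: "length M < length K" using lK Tne by simp
      obtain tM where tM: "reduced tM" "polish tM = M" using less.hyps[OF lM] a by blast
      show ?thesis using tM tT a KMT by (intro exI[of _ "Node [tM, tT]"]) simp
    next
      assume a: "hd K \<ge> 2 \<and> okl ((hd K - 1) # M)"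
      have lM: "length ((hd K - 1) # M) < length K" using lK Tne by simp
      obtain t' where t': "reduced t'" "polish t' = (hd K - 1) # M" using less.hyps[OF lM] a by blast
      then obtain ts where ts: "t' = Node ts" using a by (cases t') auto
      have "length ts - 1 = hd K - 1" "concat (map polish ts) = M" using t' ts by auto
      moreover have "length ts \<ge> 2" using t' ts by simp
      ultimately have lts: "length ts = hd K" using a by linarith
      have "reduced (Node (ts @ [tT]))" using t' ts tT by auto
      moreover have "polish (Node (ts @ [tT])) = K"
        using lts \<open>concat (map polish ts) = M\<close> tT KMT by simp
      ultimately show ?thesis by blast
    qed
  qed
qed

lemma reduced_leaves: "reduced t \<Longrightarrow> leaves t \<ge> 1"
proof (induction t)
  case Leaf then show ?case by simp
next
  case (Node ts)
  then obtain u us where "ts = u # us" by (cases ts) auto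
  then show ?case using Node by (simp add: trans_le_add1)
qed

lemma reduced_leaves2: "reduced (Node ts) \<Longrightarrow> leaves (Node ts) \<ge> 2"
proof -
  assume r: "reduced (Node ts)"
  then obtain u v us where ts: "ts = u # v # us" by (cases ts rule: remdups_adj.cases) auto
  have "leaves u \<ge> 1" "leaves v \<ge> 1" using r ts reduced_leaves by auto
  thus ?thesis using ts by simp
qed

lemma pc_iff: "K \<in> schroeder_pc \<longleftrightarrow> okl K \<and> length K \<ge> 2"
proof
  assume "K \<in> schroeder_pc"
  then obtain t where t: "K = polish t" "reduced t" "leaves t \<ge> 2" unfolding schroeder_pc_def by blast
  then obtain ts where ts: "t = Node ts" by (cases t) auto
  have "length ts \<ge> 2" using t ts by simp
  then obtain u us where "ts = u # us" by (cases ts) auto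
  moreover have "polish u \<noteq> []" by (cases u) auto
  ultimately have "length (concat (map polish ts)) \<ge> 1" by (simp add: Suc_leI)
  moreover have "okl K" using polish_ok[OF t(2)] t(1) by simp
  ultimately show "okl K \<and> length K \<ge> 2" using t ts by simp
next
  assume a: "okl K \<and> length K \<ge> 2"
  then obtain t where t: "reduced t" "polish t = K" using parse by blast
  then obtain ts where "t = Node ts" using a by (cases t) auto
  thus "K \<in> schroeder_pc" using t reduced_leaves2 unfolding schroeder_pc_def by blast
qed



definition nz :: "nat list \<Rightarrow> bool" where "nz Y \<longleftrightarrow> Y \<noteq> [] \<and> last Y \<noteq> 0"

lemma rev_replicate_takeWhile: "takeWhile (\<lambda>a. a = 0) L = replicate (length (takeWhile (\<lambda>a. a = 0) L)) (0::nat)"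
  by (induction L) auto

lemma strip_trail: "strip_zeros J @ replicate (trail_zeros J) 0 = J"
proof -
  have "rev J = takeWhile (\<lambda>a. a = 0) (rev J) @ dropWhile (\<lambda>a. a = 0) (rev J)" by simp
  hence "J = rev (dropWhile (\<lambda>a. a = 0) (rev J)) @ rev (takeWhile (\<lambda>a. a = 0) (rev J))"
    by (metis rev_append rev_rev_ident)
  also have "rev (takeWhile (\<lambda>a. a = 0) (rev J)) = replicate (trail_zeros J) 0"
    unfolding trail_zeros_def by (subst rev_replicate_takeWhile) simp
  finally show ?thesis unfolding strip_zeros_def by simp
qed

lemma st_app:
  assumes "Y = [] \<or> last Y \<noteq> 0"
  shows "strip_zeros (Y @ replicate n 0) = Y" "trail_zeros (Y @ replicate n 0) = n"
proof -
  have t: "takeWhile (\<lambda>a. a = 0) (rev Y) = []" "dropWhile (\<lambda>a. a = 0) (rev Y) = rev Y"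
    using assms by (cases Y rule: rev_cases; simp)+
  have tw: "takeWhile (\<lambda>a. a = 0) (replicate n (0::nat) @ rev Y) = replicate n 0 @ takeWhile (\<lambda>a. a = 0) (rev Y)"
    by (induction n) auto
  have dw: "dropWhile (\<lambda>a. a = 0) (replicate n (0::nat) @ rev Y) = dropWhile (\<lambda>a. a = 0) (rev Y)"
    by (induction n) auto
  show "strip_zeros (Y @ replicate n 0) = Y" unfolding strip_zeros_def using dw t by simp
  show "trail_zeros (Y @ replicate n 0) = n" unfolding trail_zeros_def using tw t by simp
qed

lemma st_nz: "nz Y \<Longrightarrow> strip_zeros (Y @ replicate n 0) = Y \<and> trail_zeros (Y @ replicate n 0) = n"
  using st_app[of Y n] by (auto simp: nz_def)

lemma pc_ok: "I \<in> schroeder_pc \<Longrightarrow> okl I" and pc_len: "I \<in> schroeder_pc \<Longrightarrow> length I \<ge> 2"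
  by (simp_all add: pc_iff)

lemma pc_hd: "I \<in> schroeder_pc \<Longrightarrow> hd I \<noteq> 0"
  using okl_hd pc_iff by blast

lemma pc_rep:
  assumes "I \<in> schroeder_pc"
  shows "nz (strip_zeros I)" "trail_zeros I \<ge> 1" "I = strip_zeros I @ replicate (trail_zeros I) 0"
    "hd (strip_zeros I) = hd I"
proof -
  have ok: "okl I" and len: "length I \<ge> 2" using assms by (simp_all add: pc_iff)
  have hI: "hd I \<noteq> 0" using okl_hd[OF ok len] .
  have lI: "last I = 0" using okl_last[OF ok] .
  show e: "I = strip_zeros I @ replicate (trail_zeros I) 0" using strip_trail[of I] by simp
  have sne: "strip_zeros I \<noteq> []"
  proof
    assume "strip_zeros I = []"
    hence "I = replicate (trail_zeros I) 0" using e by simp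
    thus False using hI len by (metis hd_replicate list.size(3) not_numeral_le_zero replicate_empty)
  qed
  show "hd (strip_zeros I) = hd I" using sne by (subst (2) e) simp
  have "last (strip_zeros I) \<noteq> 0"
  proof -
    have "dropWhile (\<lambda>a. a = 0) (rev I) \<noteq> []" using sne unfolding strip_zeros_def by simp
    hence "hd (dropWhile (\<lambda>a. a = 0) (rev I)) \<noteq> 0"
      by (metis (mono_tags, lifting) hd_dropWhile)
    thus ?thesis unfolding strip_zeros_def using sne
      by (simp add: last_rev strip_zeros_def)
  qed
  thus "nz (strip_zeros I)" using sne by (simp add: nz_def)
  show "trail_zeros I \<ge> 1"
  proof (rule ccontr)
    assume "\<not> trail_zeros I \<ge> 1"
    hence "trail_zeros I = 0" by simp
    hence "I = strip_zeros I" using strip_trail[of I] by simp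
    thus False using lI \<open>last (strip_zeros I) \<noteq> 0\<close> by simp
  qed
qed

lemma prec_eq: "J \<noteq> [] \<Longrightarrow> last J = 0 \<Longrightarrow> prec_pc I J = butlast J @ I"
proof -
  assume "J \<noteq> []" "last J = 0"
  have "trail_zeros J \<ge> 1"
  proof (rule ccontr)
    assume "\<not> trail_zeros J \<ge> 1"
    hence "trail_zeros J = 0" by simp
    thus False using \<open>J \<noteq> []\<close> \<open>last J = 0\<close> unfolding trail_zeros_def
      by (cases J rule: rev_cases) auto
  qed
  then obtain n where n: "trail_zeros J = Suc n" by (cases "trail_zeros J") auto
  have "butlast J = strip_zeros J @ replicate n 0"
    using strip_trail[of J] n by (metis butlast_append butlast_snoc replicate_Suc replicate_append_same replicate_empty append_is_Nil_conv butlast.simps(1))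
  thus ?thesis unfolding prec_pc_def using n by simp
qed

lemma nz_app: "nz Y \<Longrightarrow> nz (X @ Y)" by (simp add: nz_def)

lemma tri_join_app1: "Y \<noteq> [] \<Longrightarrow> tri_join (Z @ Y) X = Z @ tri_join Y X"
  by (simp add: tri_join_def butlast_append)
lemma tri_join_app2: "X \<noteq> [] \<Longrightarrow> tri_join Y (X @ W) = tri_join Y X @ W"
  by (cases X) (simp_all add: tri_join_def)
lemma tri_join_ne: "tri_join Y X \<noteq> []" by (simp add: tri_join_def)
lemma tri_join_assoc: "Y \<noteq> [] \<Longrightarrow> X \<noteq> [] \<Longrightarrow> tri_join (tri_join Z Y) X = tri_join Z (tri_join Y X)"
  by (cases X; cases Y) (simp_all add: tri_join_def butlast_append)
lemma tri_join_nz: "nz Y \<Longrightarrow> nz X \<Longrightarrow> nz (tri_join Y X)"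
  by (cases X) (auto simp: nz_def tri_join_def)

lemma ops_rep:
  assumes "nz X" "nz Y" "a \<ge> 1" "b \<ge> 1"
  shows "prec_pc (X @ replicate a 0) (Y @ replicate b 0) = (Y @ replicate (b - 1) 0 @ X) @ replicate a 0"
    "succ_pc (X @ replicate a 0) (Y @ replicate b 0) = (Y @ X) @ replicate (a + b - 1) 0"
    "circ_pc (X @ replicate a 0) (Y @ replicate b 0) = tri_join Y X @ replicate (a + b - 1) 0"
proof -
  obtain b' where b: "b = Suc b'" using assms by (cases b) auto
  have XY: "X \<noteq> []" "Y \<noteq> []" using assms by (auto simp: nz_def)
  show "prec_pc (X @ replicate a 0) (Y @ replicate b 0) = (Y @ replicate (b - 1) 0 @ X) @ replicate a 0"
    using b by (subst prec_eq) (auto simp: butlast_append replicate_append_same[symmetric])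
  show "succ_pc (X @ replicate a 0) (Y @ replicate b 0) = (Y @ X) @ replicate (a + b - 1) 0"
    unfolding succ_pc_def using st_nz[OF assms(2)] assms by (simp add: replicate_add[symmetric])
  show "circ_pc (X @ replicate a 0) (Y @ replicate b 0) = tri_join Y X @ replicate (a + b - 1) 0"
    unfolding circ_pc_def using st_nz[OF assms(2)] assms XY by (simp add: replicate_add[symmetric] tri_join_app2)
qed



definition mk :: "nat list \<Rightarrow> nat \<Rightarrow> nat list" where "mk X a = X @ replicate a 0"

lemma pc_mk: "I \<in> schroeder_pc \<Longrightarrow> \<exists>X a. I = mk X a \<and> nz X \<and> a \<ge> 1"
  using pc_rep[of I] unfolding mk_def by metis

lemma nz_ne: "nz X \<Longrightarrow> X \<noteq> []" by (simp add: nz_def)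

lemma ops_mk:
  assumes "nz X" "nz Y" "a \<ge> 1" "b \<ge> 1"
  shows "prec_pc (mk X a) (mk Y b) = mk (Y @ replicate (b - 1) 0 @ X) a"
    "succ_pc (mk X a) (mk Y b) = mk (Y @ X) (a + b - 1)"
    "circ_pc (mk X a) (mk Y b) = mk (tri_join Y X) (a + b - 1)"
  using ops_rep[OF assms] unfolding mk_def by simp_all

lemmas simps_mk = ops_mk nz_app tri_join_nz tri_join_ne tri_join_assoc tri_join_app1 tri_join_app2

lemma pc_identities:
  assumes "I \<in> schroeder_pc" "J \<in> schroeder_pc" "K \<in> schroeder_pc"
  shows "prec_pc (prec_pc I J) K = prec_pc I (prec_pc J K)"
    "circ_pc (circ_pc I J) K = circ_pc I (circ_pc J K)"
    "succ_pc (succ_pc I J) K = succ_pc I (succ_pc J K)"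
    "prec_pc (succ_pc I J) K = succ_pc I (prec_pc J K)"
    "prec_pc (circ_pc I J) K = circ_pc I (prec_pc J K)"
    "circ_pc (succ_pc I J) K = succ_pc I (circ_pc J K)"
    "succ_pc (circ_pc I J) K = circ_pc I (succ_pc J K)"
proof -
  obtain X a where I: "I = mk X a" "nz X" "a \<ge> 1" using pc_mk[OF assms(1)] by blast
  obtain Y b where J: "J = mk Y b" "nz Y" "b \<ge> 1" using pc_mk[OF assms(2)] by blast
  obtain Z c where K: "K = mk Z c" "nz Z" "c \<ge> 1" using pc_mk[OF assms(3)] by blast
  note ne = nz_ne[OF I(2)] nz_ne[OF J(2)] nz_ne[OF K(2)]
  show "prec_pc (prec_pc I J) K = prec_pc I (prec_pc J K)"
    "circ_pc (circ_pc I J) K = circ_pc I (circ_pc J K)"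
    "succ_pc (succ_pc I J) K = succ_pc I (succ_pc J K)"
    "prec_pc (succ_pc I J) K = succ_pc I (prec_pc J K)"
    "prec_pc (circ_pc I J) K = circ_pc I (prec_pc J K)"
    "circ_pc (succ_pc I J) K = succ_pc I (circ_pc J K)"
    "succ_pc (circ_pc I J) K = circ_pc I (succ_pc J K)"
    using I J K ne by (simp_all add: simps_mk add.commute add.left_commute)
qed

lemma pc_closed:
  assumes "I \<in> schroeder_pc" "J \<in> schroeder_pc"
  shows "prec_pc I J \<in> schroeder_pc" "succ_pc I J \<in> schroeder_pc" "circ_pc I J \<in> schroeder_pc"
proof -
  have okI: "okl I" and lI: "length I \<ge> 2" using assms(1) by (simp_all add: pc_iff)
  have okJ: "okl J" using assms(2) by (simp add: pc_iff)
  have hI: "hd I \<noteq> 0" using pc_hd[OF assms(1)] .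
  obtain Y b where J: "J = mk Y b" "nz Y" "b \<ge> 1" using pc_mk[OF assms(2)] by blast
  obtain b' where b: "b = Suc b'" using J by (cases b) auto
  have Jeq: "J = Y @ 0 # replicate b' 0" using J b by (simp add: mk_def replicate_append_same[symmetric])
  have ne: "J \<noteq> []" "last J = 0" using okl_nonempty[OF okJ] okl_last[OF okJ] by auto
  have "butlast J @ [0] = J" using ne append_butlast_last_id by metis
  hence "okl (butlast J @ 0 # [])" using okJ by simp
  hence "okl (butlast J @ I @ [])" using okl_replace okI by blast
  hence "okl (prec_pc I J)" using prec_eq[OF ne] by simp
  moreover have "length (prec_pc I J) \<ge> 2" using prec_eq[OF ne] lI by simp
  ultimately show "prec_pc I J \<in> schroeder_pc" by (simp add: pc_iff)
  have st: "strip_zeros J = Y" "trail_zeros J = b" using st_nz[OF J(2)] J(1) unfolding mk_def by auto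
  have succ: "succ_pc I J = Y @ I @ replicate b' 0" unfolding succ_pc_def st b by simp
  have oks: "okl (Y @ I @ replicate b' 0)" using okl_replace[of Y "replicate b' 0" I] okJ Jeq okI by simp
  thus "succ_pc I J \<in> schroeder_pc" using succ lI by (simp add: pc_iff)
  obtain i R where IR: "I = i # R" using lI by (cases I) auto
  obtain Y0 y where Yy: "Y = Y0 @ [y]" using J(2) by (cases Y rule: rev_cases) (auto simp: nz_def)
  have y: "y > 0" using J(2) Yy by (simp add: nz_def)
  have i: "i > 0" using hI IR by simp
  have circ: "circ_pc I J = Y0 @ (y + i) # R @ replicate b' 0"
    unfolding circ_pc_def st b by (simp add: tri_join_def Yy IR)
  have "okl (Y0 @ y # i # (R @ replicate b' 0))" using oks Yy IR by simp
  from okl_merge[OF this y i] have "okl (circ_pc I J)" using circ by simp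
  moreover have "length (circ_pc I J) \<ge> 2" using circ lI IR by simp
  ultimately show "circ_pc I J \<in> schroeder_pc" by (simp add: pc_iff)
qed



datatype opk = OP | OC | OS

fun opL :: "opk \<Rightarrow> nat list \<Rightarrow> nat list \<Rightarrow> nat list" where
  "opL OP = prec_pc" | "opL OC = circ_pc" | "opL OS = succ_pc"

definition xx :: "nat list" where "xx = [1,0,0]"

definition nfc :: "opk \<Rightarrow> nat list \<Rightarrow> bool" where
  "nfc k B \<longleftrightarrow> B = xx \<or> (k = OP \<and> (\<exists>L\<in>schroeder_pc. B = succ_pc L xx \<or> B = circ_pc L xx))"

definition good :: "nat list \<Rightarrow> opk \<times> nat list \<times> nat list \<Rightarrow> bool" where
  "good K t \<longleftrightarrow> (case t of (k, A, B) \<Rightarrow>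
      A \<in> schroeder_pc \<and> B \<in> schroeder_pc \<and> opL k A B = K \<and> nfc k B)"

lemma xx_pc: "xx \<in> schroeder_pc" using okl_x by (simp add: pc_iff xx_def)

lemma pc_len3: "I \<in> schroeder_pc \<Longrightarrow> length I \<ge> 3"
proof (rule ccontr)
  assume a: "I \<in> schroeder_pc" "\<not> length I \<ge> 3"
  hence "length I = 2" using pc_len by fastforce
  then obtain u v where "I = [u, v]" by (cases I rule: remdups_adj.cases) auto
  thus False using a pc_ok[OF a(1)] unfolding okl_def
    by (auto simp: hw_def split: if_splits dest!: spec[where x=1])
qed

lemma xx_strip: "strip_zeros xx = [1]" "trail_zeros xx = 2"
  using st_nz[of "[1]" 2] by (simp_all add: nz_def numeral_2_eq_2 xx_def)

lemma prec_xx: "prec_pc A xx = 1 # 0 # A" by (subst prec_eq) (auto simp: xx_def)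
lemma succ_xx: "succ_pc A xx = 1 # A @ [0]" unfolding succ_pc_def xx_strip by simp
lemma circ_xx: "A \<noteq> [] \<Longrightarrow> circ_pc A xx = Suc (hd A) # tl A @ [0]"
  unfolding circ_pc_def xx_strip by (cases A) (simp_all add: tri_join_def)

lemma pc_ne: "A \<in> schroeder_pc \<Longrightarrow> A \<noteq> []" using pc_len by fastforce

lemma prec_succ_xx: "prec_pc A (succ_pc L xx) = 1 # L @ A"
  unfolding succ_xx by (subst prec_eq) (auto simp: butlast_append)
lemma prec_circ_xx: "L \<noteq> [] \<Longrightarrow> prec_pc A (circ_pc L xx) = Suc (hd L) # tl L @ A"
proof -
  assume L: "L \<noteq> []"
  show ?thesis unfolding circ_xx[OF L] by (subst prec_eq) (auto simp: butlast_append)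
qed

lemma H1: "A \<in> schroeder_pc \<Longrightarrow> L \<in> schroeder_pc \<Longrightarrow> A2 \<in> schroeder_pc \<Longrightarrow> A @ [0] \<noteq> L @ A2"
proof
  assume a: "A \<in> schroeder_pc" "L \<in> schroeder_pc" "A2 \<in> schroeder_pc" "A @ [0] = L @ A2"
  hence "A = L" using okl_prefix pc_ok by blast
  hence "A2 = [0]" using a by simp
  thus False using pc_len[OF a(3)] by simp
qed

lemma H2: "L \<in> schroeder_pc \<Longrightarrow> 0 # A \<noteq> L @ A2"
  using pc_hd[of L] pc_ne[of L] by (cases L) auto

lemma H3: "L \<in> schroeder_pc \<Longrightarrow> L' \<in> schroeder_pc \<Longrightarrow> L @ A = L' @ A' \<Longrightarrow> L = L' \<and> A = A'"
  using okl_prefix pc_ok by blast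

lemma shapes:
  assumes "good K (k, A, B)"
  shows "A \<in> schroeder_pc \<and> ((k = OP \<and> B = xx \<and> K = 1 # 0 # A) \<or>
    (k = OS \<and> B = xx \<and> K = 1 # A @ [0]) \<or>
    (k = OC \<and> B = xx \<and> K = Suc (hd A) # tl A @ [0]) \<or>
    (k = OP \<and> (\<exists>L\<in>schroeder_pc. B = succ_pc L xx \<and> K = 1 # L @ A)) \<or>
    (k = OP \<and> (\<exists>L\<in>schroeder_pc. B = circ_pc L xx \<and> K = Suc (hd L) # tl L @ A)))"
proof -
  have A: "A \<in> schroeder_pc" and K: "opL k A B = K" and n: "nfc k B"
    using assms unfolding good_def by auto
  have An: "A \<noteq> []" using pc_ne[OF A] .
  show ?thesis
  proof (cases "B = xx")
    case True
    then show ?thesis using A K An by (cases k) (auto simp: prec_xx succ_xx circ_xx)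
  next
    case False
    then obtain L where L: "L \<in> schroeder_pc" "B = succ_pc L xx \<or> B = circ_pc L xx" and k: "k = OP"
      using n unfolding nfc_def by blast
    have Ln: "L \<noteq> []" using pc_ne[OF L(1)] .
    from L(2) show ?thesis
    proof
      assume B: "B = succ_pc L xx"
      have "K = 1 # L @ A" using K k B prec_succ_xx by simp
      thus ?thesis using A L(1) B k by blast
    next
      assume B: "B = circ_pc L xx"
      have "K = Suc (hd L) # tl L @ A" using K k B prec_circ_xx[OF Ln] by simp
      thus ?thesis using A L(1) B k by blast
    qed
  qed
qed

lemma R1: "A \<in> schroeder_pc \<Longrightarrow> L \<in> schroeder_pc \<Longrightarrow> A2 \<in> schroeder_pc \<Longrightarrow> (A @ [0] = L @ A2) = False"
  using H1 by blast
lemma R1': "A \<in> schroeder_pc \<Longrightarrow> L \<in> schroeder_pc \<Longrightarrow> A2 \<in> schroeder_pc \<Longrightarrow> (L @ A2 = A @ [0]) = False"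
  using H1 by metis
lemma R2: "A \<noteq> [] \<Longrightarrow> L \<noteq> [] \<Longrightarrow> (Suc (hd A) # tl A @ X = Suc (hd L) # tl L @ Y) = (A @ X = L @ Y)"
  by (cases A; cases L) auto
lemma R3: "L \<in> schroeder_pc \<Longrightarrow> L' \<in> schroeder_pc \<Longrightarrow> (L @ A = L' @ A') = (L = L' \<and> A = A')"
  using H3 by blast
lemma R4: "L \<in> schroeder_pc \<Longrightarrow> (0 # A = L @ A2) = False" "L \<in> schroeder_pc \<Longrightarrow> (L @ A2 = 0 # A) = False"
  using H2 by metis+
lemma R5: "A \<in> schroeder_pc \<Longrightarrow> (Suc (hd A) = 1) = False" "A \<in> schroeder_pc \<Longrightarrow> (1 = Suc (hd A)) = False"
  using pc_hd by auto

lemma R6: "A \<in> schroeder_pc \<Longrightarrow> (hd A = 0) = False" using pc_hd by auto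

lemma R7: "A \<in> schroeder_pc \<Longrightarrow> L \<in> schroeder_pc \<Longrightarrow> hd A = hd L \<Longrightarrow> (tl A @ X = tl L @ Y) = (A @ X = L @ Y)"
  using pc_ne[of A] pc_ne[of L] by (cases A; cases L) auto
lemma R8: "A \<in> schroeder_pc \<Longrightarrow> L \<in> schroeder_pc \<Longrightarrow> hd A = hd L \<Longrightarrow> (tl A = tl L) = (A = L)"
  using pc_ne[of A] pc_ne[of L] by (cases A; cases L) auto
lemma R9: "([0] \<in> schroeder_pc) = False" using pc_len by fastforce

lemma good_unique:
  assumes g1: "good K (k, A, B)" and g2: "good K (k', A', B')"
  shows "(k, A, B) = (k', A', B')"
proof -
  have pA: "A \<in> schroeder_pc" and pA': "A' \<in> schroeder_pc" using g1 g2 by (auto simp: good_def)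
  note s1 = shapes[OF g1] and s2 = shapes[OF g2]
  show ?thesis
    using s1 s2 pA pA' pc_ne[OF pA] pc_ne[OF pA']
    by (auto simp: R1 R1' R2 R3 R4 R5 R6 R7 R8 R9 pc_ne)
qed



lemma okl_cases: "okl T \<Longrightarrow> T = [0] \<or> T \<in> schroeder_pc"
proof -
  assume T: "okl T"
  show ?thesis
  proof (cases "length T \<ge> 2")
    case True thus ?thesis using T by (simp add: pc_iff)
  next
    case False
    then obtain a where "T = [a]" using okl_nonempty[OF T] by (cases T) (auto simp: Suc_le_eq)
    thus ?thesis using T okl_single by simp
  qed
qed

lemma good_exists:
  assumes K: "K \<in> schroeder_pc" and Kx: "K \<noteq> xx"
  shows "\<exists>t. good K t"
proof -
  have ok: "okl K" and len: "length K \<ge> 2" using K by (simp_all add: pc_iff)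
  from okl_split[OF ok len] obtain M T where
    KMT: "K = hd K # M @ T" and T: "okl T" and
    c: "(hd K = 1 \<and> okl M) \<or> (hd K \<ge> 2 \<and> okl ((hd K - 1) # M))" by blast
  from c show ?thesis
  proof
    assume a: "hd K = 1 \<and> okl M"
    hence K1: "K = 1 # M @ T" using KMT by simp
    have cT: "T = [0] \<or> T \<in> schroeder_pc" using okl_cases[OF T] .
    have cM: "M = [0] \<or> M \<in> schroeder_pc" using okl_cases a by blast
    show ?thesis
    proof (cases "T = [0]")
      case TT: True
      show ?thesis
      proof (cases "M = [0]")
        case True thus ?thesis using K1 Kx TT by (simp add: xx_def)
      next
        case False
        hence "M \<in> schroeder_pc" using cM by blast
        thus ?thesis using K1 xx_pc TT by (intro exI[of _ "(OS, M, xx)"]) (simp add: good_def nfc_def succ_xx)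
      qed
    next
      case TF: False
      hence Tp: "T \<in> schroeder_pc" using cT by blast
      show ?thesis
      proof (cases "M = [0]")
        case True thus ?thesis using K1 xx_pc Tp by (intro exI[of _ "(OP, T, xx)"]) (simp add: good_def nfc_def prec_xx)
      next
        case False
        hence "M \<in> schroeder_pc" using cM by blast
        thus ?thesis using K1 xx_pc pc_closed(2)[of M xx] Tp
          by (intro exI[of _ "(OP, T, succ_pc M xx)"]) (auto simp: good_def nfc_def prec_succ_xx)
      qed
    qed
  next
    assume a: "hd K \<ge> 2 \<and> okl ((hd K - 1) # M)"
    define L where "L = (hd K - 1) # M"
    have "M \<noteq> []" using a okl_single[of "hd K - 1"] by auto
    hence L: "L \<in> schroeder_pc" using a by (simp add: pc_iff L_def Suc_le_eq)
    have Ln: "L \<noteq> []" and hL: "Suc (hd L) = hd K" and tL: "tl L = M" using a by (auto simp: L_def)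
    from okl_cases[OF T] show ?thesis
    proof
      assume "T = [0]"
      hence "circ_pc L xx = K" using KMT circ_xx[OF Ln] hL tL by simp
      thus ?thesis using L xx_pc by (intro exI[of _ "(OC, L, xx)"]) (simp add: good_def nfc_def)
    next
      assume T: "T \<in> schroeder_pc"
      have "prec_pc T (circ_pc L xx) = K" using KMT prec_circ_xx[OF Ln] hL tL by simp
      thus ?thesis using L T xx_pc pc_closed(3)[of L xx]
        by (intro exI[of _ "(OP, T, circ_pc L xx)"]) (auto simp: good_def nfc_def)
    qed
  qed
qed

definition dec :: "nat list \<Rightarrow> opk \<times> nat list \<times> nat list" where
  "dec K = (THE t. good K t)"

lemma good_unique': "good K t \<Longrightarrow> good K t' \<Longrightarrow> t = t'"
  using good_unique by (cases t; cases t') blast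

lemma dec_eq: "good K t \<Longrightarrow> dec K = t"
  unfolding dec_def using good_unique' by blast

lemma dec_good: "K \<in> schroeder_pc \<Longrightarrow> K \<noteq> xx \<Longrightarrow> good K (dec K)"
  using good_exists dec_eq by metis

lemma len_mk: "length (mk X a) = length X + a" by (simp add: mk_def)
lemma len_tj: "X \<noteq> [] \<Longrightarrow> Y \<noteq> [] \<Longrightarrow> length (tri_join Y X) = length Y + length X - 1"
  by (cases X) (auto simp: tri_join_def)

lemma len_op:
  assumes "A \<in> schroeder_pc" "B \<in> schroeder_pc"
  shows "length (opL k A B) + 2 \<ge> length A + length B"
proof -
  obtain X a where I: "A = mk X a" "nz X" "a \<ge> 1" using pc_mk[OF assms(1)] by blast
  obtain Y b where J: "B = mk Y b" "nz Y" "b \<ge> 1" using pc_mk[OF assms(2)] by blast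
  show ?thesis using I J nz_ne[OF I(2)] nz_ne[OF J(2)]
    by (cases k) (auto simp: ops_mk len_mk len_tj)
qed

lemma good_len:
  assumes "good K (k, A, B)"
  shows "length A < length K" "length B < length K" "A \<in> schroeder_pc" "B \<in> schroeder_pc"
proof -
  have A: "A \<in> schroeder_pc" and B: "B \<in> schroeder_pc" and K: "opL k A B = K"
    using assms by (auto simp: good_def)
  show "length A < length K" "length B < length K"
    using len_op[OF A B, of k] K pc_len3[OF A] pc_len3[OF B] by auto
  show "A \<in> schroeder_pc" "B \<in> schroeder_pc" by fact+
qed



fun opW :: "('w \<Rightarrow> 'w \<Rightarrow> 'w) \<Rightarrow> ('w \<Rightarrow> 'w \<Rightarrow> 'w) \<Rightarrow> ('w \<Rightarrow> 'w \<Rightarrow> 'w) \<Rightarrow> opk \<Rightarrow> 'w \<Rightarrow> 'w \<Rightarrow> 'w" where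
  "opW p c s OP = p" | "opW p c s OC = c" | "opW p c s OS = s"

fun rw :: "opk \<Rightarrow> opk \<Rightarrow> (opk \<times> opk) option" where
  "rw OP OP = Some (OP, OP)" | "rw OC OC = Some (OC, OC)" | "rw OS OS = Some (OS, OS)"
| "rw OS OP = Some (OP, OS)" | "rw OC OP = Some (OP, OC)" | "rw OS OC = Some (OC, OS)"
| "rw OC OS = Some (OS, OC)" | "rw OP _ = None"

lemma rwV:
  assumes "rw k k' = Some (k1, k2)" "A \<in> schroeder_pc" "B1 \<in> schroeder_pc" "B2 \<in> schroeder_pc"
  shows "opL k A (opL k' B1 B2) = opL k1 (opL k2 A B1) B2"
  using assms pc_identities[OF assms(2-4)] by (cases k; cases k') auto

lemma rwW:
  assumes "rw k k' = Some (k1, k2)" "tridup_identities UNIV p c s"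
  shows "opW p c s k x (opW p c s k' y z) = opW p c s k1 (opW p c s k2 x y) z"
  using assms unfolding tridup_identities_def by (cases k; cases k') auto

lemma rwNone: "rw k k' = None \<Longrightarrow> k = OP \<and> k' \<noteq> OP"
  by (cases k; cases k') auto

lemma opL_pc: "A \<in> schroeder_pc \<Longrightarrow> B \<in> schroeder_pc \<Longrightarrow> opL k A B \<in> schroeder_pc"
  using pc_closed by (cases k) auto

fun Phf :: "('w \<Rightarrow> 'w \<Rightarrow> 'w) \<Rightarrow> ('w \<Rightarrow> 'w \<Rightarrow> 'w) \<Rightarrow> ('w \<Rightarrow> 'w \<Rightarrow> 'w) \<Rightarrow> 'w \<Rightarrow> nat \<Rightarrow> nat list \<Rightarrow> 'w" where
  "Phf p c s w 0 K = w"
| "Phf p c s w (Suc n) K = (if K = xx then w else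
     (case dec K of (k, A, B) \<Rightarrow> opW p c s k (Phf p c s w n A) (Phf p c s w n B)))"

definition Ph :: "('w \<Rightarrow> 'w \<Rightarrow> 'w) \<Rightarrow> ('w \<Rightarrow> 'w \<Rightarrow> 'w) \<Rightarrow> ('w \<Rightarrow> 'w \<Rightarrow> 'w) \<Rightarrow> 'w \<Rightarrow> nat list \<Rightarrow> 'w" where
  "Ph p c s w K = Phf p c s w (length K) K"

lemma Phf_stable: "K \<in> schroeder_pc \<Longrightarrow> length K \<le> n \<Longrightarrow> Phf p c s w n K = Ph p c s w K"
proof (induction n arbitrary: K rule: less_induct)
  case (less n)
  obtain n' where n: "n = Suc n'" using less.prems pc_len3 by (cases n) fastforce+
  obtain m where m: "length K = Suc m" using pc_len3[OF less.prems(1)] by (cases "length K") auto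
  show ?case
  proof (cases "K = xx")
    case True thus ?thesis using n m by (simp add: Ph_def)
  next
    case False
    obtain k A B where d: "dec K = (k, A, B)" by (cases "dec K") auto
    have g: "good K (k, A, B)" using dec_good[OF less.prems(1) False] d by simp
    note gl = good_len[OF g]
    have "Phf p c s w n K = opW p c s k (Phf p c s w n' A) (Phf p c s w n' B)" using n False d by simp
    also have "\<dots> = opW p c s k (Ph p c s w A) (Ph p c s w B)"
      using less.IH[of n' A] less.IH[of n' B] gl n less.prems(2) by simp
    also have "\<dots> = opW p c s k (Phf p c s w m A) (Phf p c s w m B)"
      using less.IH[of m A] less.IH[of m B] gl n m less.prems(2) by simp
    also have "\<dots> = Ph p c s w K" using m False d by (simp add: Ph_def)
    finally show ?thesis .
  qed
qed

lemma Ph_xx: "Ph p c s w xx = w" by (simp add: Ph_def xx_def)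

lemma Ph_dec: "K \<in> schroeder_pc \<Longrightarrow> K \<noteq> xx \<Longrightarrow> dec K = (k, A, B) \<Longrightarrow>
   Ph p c s w K = opW p c s k (Ph p c s w A) (Ph p c s w B)"
proof -
  assume K: "K \<in> schroeder_pc" and Kx: "K \<noteq> xx" and d: "dec K = (k, A, B)"
  have g: "good K (k, A, B)" using dec_good[OF K Kx] d by simp
  note gl = good_len[OF g]
  obtain m where m: "length K = Suc m" using pc_len3[OF K] by (cases "length K") auto
  have "Ph p c s w K = opW p c s k (Phf p c s w m A) (Phf p c s w m B)" using m Kx d by (simp add: Ph_def)
  moreover have "Phf p c s w m A = Ph p c s w A" using Phf_stable[of A m] gl m by simp
  moreover have "Phf p c s w m B = Ph p c s w B" using Phf_stable[of B m] gl m by simp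
  ultimately show ?thesis by simp
qed

lemma Ph_good: "good K (k, A, B) \<Longrightarrow> Ph p c s w K = opW p c s k (Ph p c s w A) (Ph p c s w B)"
proof -
  assume g: "good K (k, A, B)"
  note gl = good_len[OF g]
  have K: "K \<in> schroeder_pc" using g opL_pc by (auto simp: good_def)
  have Kx: "K \<noteq> xx" using gl pc_len3[of A] by (auto simp: xx_def)
  show ?thesis using Ph_dec[OF K Kx dec_eq[OF g]] .
qed

lemma key:
  assumes T: "tridup_identities UNIV p c s"
  shows "A \<in> schroeder_pc \<Longrightarrow> B \<in> schroeder_pc \<Longrightarrow>
     Ph p c s w (opL k A B) = opW p c s k (Ph p c s w A) (Ph p c s w B)"
proof (induction "length B" arbitrary: A B k rule: less_induct)
  case less
  note A = less.prems(1) and B = less.prems(2)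
  show ?case
  proof (cases "B = xx")
    case True
    have "good (opL k A B) (k, A, B)" using A B True by (simp add: good_def nfc_def)
    thus ?thesis by (rule Ph_good)
  next
    case Bx: False
    obtain k' B1 B2 where d: "dec B = (k', B1, B2)" by (cases "dec B") auto
    have g: "good B (k', B1, B2)" using dec_good[OF B Bx] d by simp
    note gl = good_len[OF g]
    have Beq: "B = opL k' B1 B2" and n: "nfc k' B2" using g by (auto simp: good_def)
    have PhB: "Ph p c s w B = opW p c s k' (Ph p c s w B1) (Ph p c s w B2)"
      using Ph_dec[OF B Bx d] .
    show ?thesis
    proof (cases "rw k k'")
      case None
      hence kk: "k = OP" "k' \<noteq> OP" using rwNone by auto
      hence "B2 = xx" using n by (simp add: nfc_def)
      hence "nfc k B" using kk Beq gl by (cases k') (auto simp: nfc_def)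
      hence "good (opL k A B) (k, A, B)" using A B by (simp add: good_def)
      thus ?thesis by (rule Ph_good)
    next
      case (Some r)
      obtain k1 k2 where r: "rw k k' = Some (k1, k2)" using Some by (cases r) auto
      have A1: "opL k2 A B1 \<in> schroeder_pc" using opL_pc A gl by simp
      have "Ph p c s w (opL k A B) = Ph p c s w (opL k1 (opL k2 A B1) B2)"
        using rwV[OF r A gl(3) gl(4)] Beq by simp
      also have "\<dots> = opW p c s k1 (Ph p c s w (opL k2 A B1)) (Ph p c s w B2)"
        using less.hyps[OF gl(2) A1 gl(4)] .
      also have "\<dots> = opW p c s k1 (opW p c s k2 (Ph p c s w A) (Ph p c s w B1)) (Ph p c s w B2)"
        using less.hyps[OF gl(1) A gl(3)] by simp
      also have "\<dots> = opW p c s k (Ph p c s w A) (Ph p c s w B)"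
        using rwW[OF r T] PhB by simp
      finally show ?thesis .
    qed
  qed
qed



abbreviation supp :: "(nat list \<Rightarrow> complex) \<Rightarrow> nat list set" where "supp f \<equiv> {I. f I \<noteq> 0}"

lemma Vset_iff: "f \<in> Vset \<longleftrightarrow> finite (supp f) \<and> supp f \<subseteq> schroeder_pc"
  by (simp add: Vset_def)

lemma bilin_sum:
  assumes "finite A" "finite B" "supp f \<subseteq> A" "supp g \<subseteq> B"
  shows "bilin_ext b f g K = (\<Sum>I\<in>A. \<Sum>J\<in>B. if b I J = K then f I * g J else 0)"
proof -
  have "bilin_ext b f g K = (\<Sum>I\<in>supp f. \<Sum>J\<in>B. if b I J = K then f I * g J else 0)"
    unfolding bilin_ext_def
    by (rule sum.cong[OF refl], rule sum.mono_neutral_left) (use assms in auto)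
  also have "\<dots> = (\<Sum>I\<in>A. \<Sum>J\<in>B. if b I J = K then f I * g J else 0)"
    apply (rule sum.mono_neutral_left)
    using assms apply auto[2]
    by (intro ballI sum.neutral) auto
  finally show ?thesis .
qed

lemma supp_bilin: "supp (bilin_ext b f g) \<subseteq> (\<lambda>(I, J). b I J) ` (supp f \<times> supp g)"
proof
  fix K assume "K \<in> supp (bilin_ext b f g)"
  hence "(\<Sum>I\<in>supp f. \<Sum>J\<in>supp g. if b I J = K then f I * g J else 0) \<noteq> 0"
    unfolding bilin_ext_def by simp
  then obtain I where I: "I \<in> supp f" "(\<Sum>J\<in>supp g. if b I J = K then f I * g J else 0) \<noteq> 0"
    by (rule sum.not_neutral_contains_not_neutral) blast
  obtain J where J: "J \<in> supp g" "(if b I J = K then f I * g J else (0::complex)) \<noteq> 0"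
    using sum.not_neutral_contains_not_neutral[OF I(2)] by blast
  thus "K \<in> (\<lambda>(I, J). b I J) ` (supp f \<times> supp g)" using I J by (auto split: if_splits)
qed

lemma bilin_Vset:
  assumes "f \<in> Vset" "g \<in> Vset" "\<And>I J. I \<in> schroeder_pc \<Longrightarrow> J \<in> schroeder_pc \<Longrightarrow> b I J \<in> schroeder_pc"
  shows "bilin_ext b f g \<in> Vset"
proof -
  have fs: "finite (supp f)" "finite (supp g)" "supp f \<subseteq> schroeder_pc" "supp g \<subseteq> schroeder_pc"
    using assms(1,2) unfolding Vset_iff by auto
  have fin: "finite ((\<lambda>(I, J). b I J) ` (supp f \<times> supp g))"
    using fs(1,2) by (intro finite_imageI finite_cartesian_product)
  have sub: "(\<lambda>(I, J). b I J) ` (supp f \<times> supp g) \<subseteq> schroeder_pc"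
  proof
    fix K assume "K \<in> (\<lambda>(I, J). b I J) ` (supp f \<times> supp g)"
    then obtain I J where "K = b I J" "I \<in> supp f" "J \<in> supp g" by auto
    thus "K \<in> schroeder_pc" using fs assms(3) by blast
  qed
  show ?thesis unfolding Vset_iff
    using finite_subset[OF supp_bilin fin] subset_trans[OF supp_bilin sub] by blast
qed

lemma addV_Vset: "f \<in> Vset \<Longrightarrow> g \<in> Vset \<Longrightarrow> addV f g \<in> Vset"
proof -
  assume "f \<in> Vset" "g \<in> Vset"
  moreover have "supp (addV f g) \<subseteq> supp f \<union> supp g" by (auto simp: addV_def)
  ultimately show ?thesis unfolding Vset_iff
    by (metis (no_types, lifting) finite_Un finite_subset le_sup_iff subset_trans)
qed

lemma scaleV_Vset: "f \<in> Vset \<Longrightarrow> scaleV c f \<in> Vset"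
proof -
  assume "f \<in> Vset"
  moreover have "supp (scaleV c f) \<subseteq> supp f" by (auto simp: scaleV_def)
  ultimately show ?thesis unfolding Vset_iff using finite_subset by blast
qed

lemma zeroV_Vset: "zeroV \<in> Vset" by (simp add: Vset_iff zeroV_def)

lemma bilin_add1:
  assumes "f \<in> Vset" "g \<in> Vset" "h \<in> Vset"
  shows "bilin_ext b (addV f g) h = addV (bilin_ext b f h) (bilin_ext b g h)"
proof
  fix K
  define A where "A = supp f \<union> supp g"
  have fA: "finite A" using assms by (simp add: A_def Vset_iff)
  have s: "supp f \<subseteq> A" "supp g \<subseteq> A" "supp (addV f g) \<subseteq> A" by (auto simp: A_def addV_def)
  have fh: "finite (supp h)" using assms by (simp add: Vset_iff)
  show "bilin_ext b (addV f g) h K = addV (bilin_ext b f h) (bilin_ext b g h) K"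
    unfolding addV_def bilin_sum[OF fA fh s(1) order_refl] bilin_sum[OF fA fh s(2) order_refl]
      bilin_sum[OF fA fh s(3)[unfolded addV_def] order_refl]
  proof -
    have "\<And>I J. (if b I J = K then (f I + g I) * h J else 0) = (if b I J = K then f I * h J else 0) + (if b I J = K then g I * h J else 0)"
      by (simp add: distrib_right)
    thus "(\<Sum>I\<in>A. \<Sum>J\<in>supp h. if b I J = K then (f I + g I) * h J else 0) =
      (\<Sum>I\<in>A. \<Sum>J\<in>supp h. if b I J = K then f I * h J else 0) + (\<Sum>I\<in>A. \<Sum>J\<in>supp h. if b I J = K then g I * h J else 0)"
      by (simp only: sum.distrib)
  qed
qed

lemma bilin_add2:
  assumes "f \<in> Vset" "g \<in> Vset" "h \<in> Vset"
  shows "bilin_ext b h (addV f g) = addV (bilin_ext b h f) (bilin_ext b h g)"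
proof
  fix K
  define A where "A = supp f \<union> supp g"
  have fA: "finite A" using assms by (simp add: A_def Vset_iff)
  have s: "supp f \<subseteq> A" "supp g \<subseteq> A" "supp (addV f g) \<subseteq> A" by (auto simp: A_def addV_def)
  have fh: "finite (supp h)" using assms by (simp add: Vset_iff)
  show "bilin_ext b h (addV f g) K = addV (bilin_ext b h f) (bilin_ext b h g) K"
    unfolding addV_def bilin_sum[OF fh fA order_refl s(1)] bilin_sum[OF fh fA order_refl s(2)]
      bilin_sum[OF fh fA order_refl s(3)[unfolded addV_def]]
  proof -
    have "\<And>I J. (if b I J = K then h I * (f J + g J) else 0) = (if b I J = K then h I * f J else 0) + (if b I J = K then h I * g J else 0)"
      by (simp add: distrib_left)
    thus "(\<Sum>I\<in>supp h. \<Sum>J\<in>A. if b I J = K then h I * (f J + g J) else 0) =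
      (\<Sum>I\<in>supp h. \<Sum>J\<in>A. if b I J = K then h I * f J else 0) + (\<Sum>I\<in>supp h. \<Sum>J\<in>A. if b I J = K then h I * g J else 0)"
      by (simp only: sum.distrib)
  qed
qed

lemma bilin_scale1:
  assumes "f \<in> Vset" "g \<in> Vset"
  shows "bilin_ext b (scaleV a f) g = scaleV a (bilin_ext b f g)"
proof
  fix K
  have ff: "finite (supp f)" and fg: "finite (supp g)" using assms by (simp_all add: Vset_iff)
  have s: "supp (scaleV a f) \<subseteq> supp f" by (auto simp: scaleV_def)
  show "bilin_ext b (scaleV a f) g K = scaleV a (bilin_ext b f g) K"
    unfolding scaleV_def bilin_sum[OF ff fg order_refl order_refl]
      bilin_sum[OF ff fg s[unfolded scaleV_def] order_refl]
  proof -
    have "\<And>I J. (if b I J = K then a * f I * g J else 0) = a * (if b I J = K then f I * g J else 0)"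
      by simp
    thus "(\<Sum>I\<in>supp f. \<Sum>J\<in>supp g. if b I J = K then a * f I * g J else 0) =
      a * (\<Sum>I\<in>supp f. \<Sum>J\<in>supp g. if b I J = K then f I * g J else 0)"
      by (simp only: sum_distrib_left)
  qed
qed

lemma bilin_scale2:
  assumes "f \<in> Vset" "g \<in> Vset"
  shows "bilin_ext b f (scaleV a g) = scaleV a (bilin_ext b f g)"
proof
  fix K
  have ff: "finite (supp f)" and fg: "finite (supp g)" using assms by (simp_all add: Vset_iff)
  have s: "supp (scaleV a g) \<subseteq> supp g" by (auto simp: scaleV_def)
  show "bilin_ext b f (scaleV a g) K = scaleV a (bilin_ext b f g) K"
    unfolding scaleV_def bilin_sum[OF ff fg order_refl order_refl]
      bilin_sum[OF ff fg order_refl s[unfolded scaleV_def]]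
  proof -
    have "\<And>I J. (if b I J = K then f I * (a * g J) else 0) = a * (if b I J = K then f I * g J else 0)"
      by simp
    thus "(\<Sum>I\<in>supp f. \<Sum>J\<in>supp g. if b I J = K then f I * (a * g J) else 0) =
      a * (\<Sum>I\<in>supp f. \<Sum>J\<in>supp g. if b I J = K then f I * g J else 0)"
      by (simp only: sum_distrib_left)
  qed
qed



lemma collapse:
  assumes "finite A" "finite B" "finite Ms" "\<And>I J. I \<in> A \<Longrightarrow> J \<in> B \<Longrightarrow> b I J \<in> Ms"
  shows "(\<Sum>M\<in>Ms. if P M then a M * (\<Sum>I\<in>A. \<Sum>J\<in>B. if b I J = M then F I J else 0) else (0::complex))
       = (\<Sum>I\<in>A. \<Sum>J\<in>B. if P (b I J) then a (b I J) * F I J else 0)"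
proof -
  have "(\<Sum>M\<in>Ms. if P M then a M * (\<Sum>I\<in>A. \<Sum>J\<in>B. if b I J = M then F I J else 0) else 0)
      = (\<Sum>M\<in>Ms. \<Sum>I\<in>A. \<Sum>J\<in>B. if b I J = M then (if P M then a M * F I J else 0) else 0)"
  proof (rule sum.cong[OF refl])
    fix M
    show "(if P M then a M * (\<Sum>I\<in>A. \<Sum>J\<in>B. if b I J = M then F I J else 0) else 0)
      = (\<Sum>I\<in>A. \<Sum>J\<in>B. if b I J = M then (if P M then a M * F I J else 0) else 0)"
    proof (cases "P M")
      case True
      have "a M * (\<Sum>I\<in>A. \<Sum>J\<in>B. if b I J = M then F I J else 0)
          = (\<Sum>I\<in>A. \<Sum>J\<in>B. a M * (if b I J = M then F I J else 0))"
        by (simp add: sum_distrib_left)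
      thus ?thesis using True by (simp add: if_distrib[of "\<lambda>x. a M * x"] cong: if_cong)
    next
      case False
      show ?thesis unfolding if_not_P[OF False] by simp
    qed
  qed
  also have "\<dots> = (\<Sum>I\<in>A. \<Sum>M\<in>Ms. \<Sum>J\<in>B. if b I J = M then (if P M then a M * F I J else 0) else 0)"
    by (rule sum.swap)
  also have "\<dots> = (\<Sum>I\<in>A. \<Sum>J\<in>B. \<Sum>M\<in>Ms. if b I J = M then (if P M then a M * F I J else 0) else 0)"
    by (rule sum.cong[OF refl], rule sum.swap)
  also have "\<dots> = (\<Sum>I\<in>A. \<Sum>J\<in>B. if P (b I J) then a (b I J) * F I J else 0)"
    using assms by (intro sum.cong refl) (simp add: sum.delta)
  finally show ?thesis .
qed

lemma bilin_assoc:
  assumes f: "f \<in> Vset" and g: "g \<in> Vset" and h: "h \<in> Vset"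
    and c2: "\<And>I J. I \<in> schroeder_pc \<Longrightarrow> J \<in> schroeder_pc \<Longrightarrow> b2 I J \<in> schroeder_pc"
    and c4: "\<And>I J. I \<in> schroeder_pc \<Longrightarrow> J \<in> schroeder_pc \<Longrightarrow> b4 I J \<in> schroeder_pc"
    and e: "\<And>I J L. I \<in> schroeder_pc \<Longrightarrow> J \<in> schroeder_pc \<Longrightarrow> L \<in> schroeder_pc \<Longrightarrow>
              b1 (b2 I J) L = b3 I (b4 J L)"
  shows "bilin_ext b1 (bilin_ext b2 f g) h = bilin_ext b3 f (bilin_ext b4 g h)"
proof
  fix K
  define A where "A = supp f"
  define B where "B = supp g"
  define C where "C = supp h"
  define Ms where "Ms = (\<lambda>(I, J). b2 I J) ` (A \<times> B)"
  define Ns where "Ns = (\<lambda>(I, J). b4 I J) ` (B \<times> C)"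
  have fin: "finite A" "finite B" "finite C" "finite Ms" "finite Ns"
    using f g h by (simp_all add: Vset_iff A_def B_def C_def Ms_def Ns_def)
  have sub: "A \<subseteq> schroeder_pc" "B \<subseteq> schroeder_pc" "C \<subseteq> schroeder_pc"
    using f g h by (simp_all add: Vset_iff A_def B_def C_def)
  have sM: "supp (bilin_ext b2 f g) \<subseteq> Ms" using supp_bilin A_def B_def Ms_def by blast
  have sN: "supp (bilin_ext b4 g h) \<subseteq> Ns" using supp_bilin B_def C_def Ns_def by blast
  have inM: "\<And>I J. I \<in> A \<Longrightarrow> J \<in> B \<Longrightarrow> b2 I J \<in> Ms" by (auto simp: Ms_def)
  have inN: "\<And>I J. I \<in> B \<Longrightarrow> J \<in> C \<Longrightarrow> b4 I J \<in> Ns" by (auto simp: Ns_def)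
  have "bilin_ext b1 (bilin_ext b2 f g) h K
      = (\<Sum>M\<in>Ms. \<Sum>L\<in>C. if b1 M L = K then bilin_ext b2 f g M * h L else 0)"
    by (rule bilin_sum[OF fin(4) fin(3) sM]) (simp add: C_def)
  also have "\<dots> = (\<Sum>L\<in>C. \<Sum>M\<in>Ms. if b1 M L = K then bilin_ext b2 f g M * h L else 0)"
    by (rule sum.swap)
  also have "\<dots> = (\<Sum>L\<in>C. \<Sum>M\<in>Ms. if b1 M L = K then h L * (\<Sum>I\<in>A. \<Sum>J\<in>B. if b2 I J = M then f I * g J else 0) else 0)"
    by (intro sum.cong refl) (simp add: bilin_sum[OF fin(1) fin(2)] A_def B_def mult.commute)
  also have "\<dots> = (\<Sum>L\<in>C. \<Sum>I\<in>A. \<Sum>J\<in>B. if b1 (b2 I J) L = K then h L * (f I * g J) else 0)"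
    by (rule sum.cong[OF refl], rule collapse[OF fin(1) fin(2) fin(4) inM])
  also have "\<dots> = (\<Sum>I\<in>A. \<Sum>L\<in>C. \<Sum>J\<in>B. if b1 (b2 I J) L = K then h L * (f I * g J) else 0)"
    by (rule sum.swap)
  also have "\<dots> = (\<Sum>I\<in>A. \<Sum>J\<in>B. \<Sum>L\<in>C. if b1 (b2 I J) L = K then h L * (f I * g J) else 0)"
    by (rule sum.cong[OF refl], rule sum.swap)
  also have "\<dots> = (\<Sum>I\<in>A. \<Sum>J\<in>B. \<Sum>L\<in>C. if b1 (b2 I J) L = K then f I * (g J * h L) else 0)"
    by (intro sum.cong refl) (simp add: mult.commute mult.left_commute)
  also have "\<dots> = (\<Sum>I\<in>A. \<Sum>J\<in>B. \<Sum>L\<in>C. if b3 I (b4 J L) = K then f I * (g J * h L) else 0)"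
  proof (intro sum.cong refl)
    fix I J L assume "I \<in> A" "J \<in> B" "L \<in> C"
    hence "b1 (b2 I J) L = b3 I (b4 J L)" using sub e by blast
    thus "(if b1 (b2 I J) L = K then f I * (g J * h L) else 0) = (if b3 I (b4 J L) = K then f I * (g J * h L) else 0)"
      by simp
  qed
  also have "\<dots> = (\<Sum>I\<in>A. \<Sum>N\<in>Ns. if b3 I N = K then f I * (\<Sum>J\<in>B. \<Sum>L\<in>C. if b4 J L = N then g J * h L else 0) else 0)"
    by (rule sum.cong[OF refl], rule collapse[OF fin(2) fin(3) fin(5) inN, symmetric])
  also have "\<dots> = bilin_ext b3 f (bilin_ext b4 g h) K"
  proof -
    have e1: "bilin_ext b3 f (bilin_ext b4 g h) K = (\<Sum>I\<in>A. \<Sum>N\<in>Ns. if b3 I N = K then f I * bilin_ext b4 g h N else 0)"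
      by (rule bilin_sum[OF fin(1) fin(5) _ sN]) (simp add: A_def)
    have e2: "bilin_ext b4 g h N = (\<Sum>J\<in>B. \<Sum>L\<in>C. if b4 J L = N then g J * h L else 0)" for N
      by (rule bilin_sum[OF fin(2) fin(3)]) (simp_all add: B_def C_def)
    show ?thesis unfolding e1 e2 ..
  qed
  finally show "bilin_ext b1 (bilin_ext b2 f g) h K = bilin_ext b3 f (bilin_ext b4 g h) K" .
qed



lemma basis_Vset: "K \<in> schroeder_pc \<Longrightarrow> basisV K \<in> Vset"
  by (simp add: Vset_iff basisV_def)

lemma supp_basis: "supp (basisV I) = {I}" by (auto simp: basisV_def)

lemma bilin_basis: "bilin_ext b (basisV I) (basisV J) = basisV (b I J)"
proof
  fix K
  show "bilin_ext b (basisV I) (basisV J) K = basisV (b I J) K"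
    by (subst bilin_sum[of "{I}" "{J}"]) (auto simp: supp_basis basisV_def)
qed

definition Tm :: "(complex \<Rightarrow> 'w::ab_group_add \<Rightarrow> 'w) \<Rightarrow> (nat list \<Rightarrow> 'w) \<Rightarrow> (nat list \<Rightarrow> complex) \<Rightarrow> 'w" where
  "Tm sc F f = (\<Sum>K\<in>supp f. sc (f K) (F K))"

lemma lin_comb:
  assumes "Vector_Spaces.linear sc sc h"
  shows "h (\<Sum>i\<in>A. sc (a i) (x i)) = (\<Sum>i\<in>A. sc (a i) (h (x i)))"
proof -
  interpret L: Vector_Spaces.linear sc sc h by fact
  show ?thesis by (simp add: L.sum L.scale)
qed

context
  fixes sc :: "complex \<Rightarrow> 'w::ab_group_add \<Rightarrow> 'w"
  assumes vs: "vector_space sc"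
begin

interpretation V: vector_space sc by (rule vs)

lemma T_sup: "finite A \<Longrightarrow> supp f \<subseteq> A \<Longrightarrow> Tm sc F f = (\<Sum>K\<in>A. sc (f K) (F K))"
  unfolding Tm_def by (rule sum.mono_neutral_left) auto

lemma T_add: "f \<in> Vset \<Longrightarrow> g \<in> Vset \<Longrightarrow> Tm sc F (addV f g) = Tm sc F f + Tm sc F g"
proof -
  assume f: "f \<in> Vset" and g: "g \<in> Vset"
  define A where "A = supp f \<union> supp g"
  have fA: "finite A" using f g by (simp add: A_def Vset_iff)
  have s: "supp f \<subseteq> A" "supp g \<subseteq> A" "supp (addV f g) \<subseteq> A" by (auto simp: A_def addV_def)
  show ?thesis unfolding T_sup[OF fA s(1)] T_sup[OF fA s(2)] T_sup[OF fA s(3)]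
    by (simp add: addV_def V.scale_left_distrib sum.distrib)
qed

lemma T_scale: "f \<in> Vset \<Longrightarrow> Tm sc F (scaleV a f) = sc a (Tm sc F f)"
proof -
  assume f: "f \<in> Vset"
  have fA: "finite (supp f)" using f by (simp add: Vset_iff)
  have s: "supp (scaleV a f) \<subseteq> supp f" by (auto simp: scaleV_def)
  have "Tm sc F (scaleV a f) = (\<Sum>K\<in>supp f. sc (scaleV a f K) (F K))" by (rule T_sup[OF fA s])
  thus ?thesis unfolding Tm_def
    by (simp add: scaleV_def V.scale_sum_right)
qed

lemma T_basis: "Tm sc F (basisV I) = F I"
  unfolding Tm_def supp_basis by (simp add: basisV_def)

lemma T_bilin:
  assumes f: "f \<in> Vset" and g: "g \<in> Vset"
    and op1: "\<And>y. Vector_Spaces.linear sc sc (\<lambda>x. op x y)"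
    and op2: "\<And>x. Vector_Spaces.linear sc sc (op x)"
    and hom: "\<And>I J. I \<in> schroeder_pc \<Longrightarrow> J \<in> schroeder_pc \<Longrightarrow> F (b I J) = op (F I) (F J)"
  shows "Tm sc F (bilin_ext b f g) = op (Tm sc F f) (Tm sc F g)"
proof -
  define A where "A = supp f"
  define B where "B = supp g"
  define S where "S = (\<lambda>(I, J). b I J) ` (A \<times> B)"
  have fin: "finite A" "finite B" "finite S" using f g by (simp_all add: Vset_iff A_def B_def S_def)
  have sub: "A \<subseteq> schroeder_pc" "B \<subseteq> schroeder_pc" using f g by (simp_all add: Vset_iff A_def B_def)
  have sS: "supp (bilin_ext b f g) \<subseteq> S" using supp_bilin A_def B_def S_def by blast
  have inS: "\<And>I J. I \<in> A \<Longrightarrow> J \<in> B \<Longrightarrow> b I J \<in> S" by (auto simp: S_def)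
  have "Tm sc F (bilin_ext b f g) = (\<Sum>K\<in>S. sc (bilin_ext b f g K) (F K))" by (rule T_sup[OF fin(3) sS])
  also have "\<dots> = (\<Sum>K\<in>S. \<Sum>I\<in>A. \<Sum>J\<in>B. sc (if b I J = K then f I * g J else 0) (F K))"
    by (rule sum.cong[OF refl]) (simp add: bilin_sum[OF fin(1) fin(2)] A_def B_def V.scale_sum_left)
  also have "\<dots> = (\<Sum>I\<in>A. \<Sum>K\<in>S. \<Sum>J\<in>B. sc (if b I J = K then f I * g J else 0) (F K))"
    by (rule sum.swap)
  also have "\<dots> = (\<Sum>I\<in>A. \<Sum>J\<in>B. \<Sum>K\<in>S. sc (if b I J = K then f I * g J else 0) (F K))"
    by (rule sum.cong[OF refl], rule sum.swap)
  also have "\<dots> = (\<Sum>I\<in>A. \<Sum>J\<in>B. sc (f I * g J) (F (b I J)))"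
  proof (intro sum.cong refl)
    fix I J assume IJ: "I \<in> A" "J \<in> B"
    have "(\<Sum>K\<in>S. sc (if b I J = K then f I * g J else 0) (F K)) = (\<Sum>K\<in>S. if b I J = K then sc (f I * g J) (F K) else 0)"
      by (rule sum.cong) auto
    also have "\<dots> = sc (f I * g J) (F (b I J))" using inS[OF IJ] fin(3) by (simp add: sum.delta)
    finally show "(\<Sum>K\<in>S. sc (if b I J = K then f I * g J else 0) (F K)) = sc (f I * g J) (F (b I J))" .
  qed
  also have "\<dots> = (\<Sum>I\<in>A. sc (f I) (\<Sum>J\<in>B. sc (g J) (op (F I) (F J))))"
  proof (intro sum.cong refl)
    fix I assume I: "I \<in> A"
    have "(\<Sum>J\<in>B. sc (f I * g J) (F (b I J))) = (\<Sum>J\<in>B. sc (f I) (sc (g J) (op (F I) (F J))))"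
    proof (rule sum.cong[OF refl])
      fix J assume "J \<in> B"
      thus "sc (f I * g J) (F (b I J)) = sc (f I) (sc (g J) (op (F I) (F J)))"
        using I sub hom by auto
    qed
    thus "(\<Sum>J\<in>B. sc (f I * g J) (F (b I J))) = sc (f I) (\<Sum>J\<in>B. sc (g J) (op (F I) (F J)))"
      by (simp add: V.scale_sum_right)
  qed
  also have "\<dots> = (\<Sum>I\<in>A. sc (f I) (op (F I) (\<Sum>J\<in>B. sc (g J) (F J))))"
    by (simp add: lin_comb[OF op2])
  also have "\<dots> = op (\<Sum>I\<in>A. sc (f I) (F I)) (\<Sum>J\<in>B. sc (g J) (F J))"
    by (simp add: lin_comb[OF op1])
  also have "\<dots> = op (Tm sc F f) (Tm sc F g)" by (simp add: Tm_def A_def B_def)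
  finally show ?thesis .
qed

end



lemma op_props:
  assumes cl: "\<And>I J. I \<in> schroeder_pc \<Longrightarrow> J \<in> schroeder_pc \<Longrightarrow> b I J \<in> schroeder_pc"
  shows "(\<forall>f\<in>Vset. \<forall>g\<in>Vset. bilin_ext b f g \<in> Vset) \<and>
        (\<forall>f\<in>Vset. \<forall>g\<in>Vset. \<forall>h\<in>Vset. bilin_ext b (addV f g) h = addV (bilin_ext b f h) (bilin_ext b g h)
                                   \<and> bilin_ext b h (addV f g) = addV (bilin_ext b h f) (bilin_ext b h g)) \<and>
        (\<forall>c. \<forall>f\<in>Vset. \<forall>g\<in>Vset. bilin_ext b (scaleV c f) g = scaleV c (bilin_ext b f g)
                                \<and> bilin_ext b f (scaleV c g) = scaleV c (bilin_ext b f g))"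
proof (intro conjI ballI allI)
  fix f g h c assume f: "f \<in> Vset" and g: "g \<in> Vset"
  show "bilin_ext b f g \<in> Vset" by (rule bilin_Vset[OF f g cl])
  show "bilin_ext b (scaleV c f) g = scaleV c (bilin_ext b f g)" by (rule bilin_scale1[OF f g])
  show "bilin_ext b f (scaleV c g) = scaleV c (bilin_ext b f g)" by (rule bilin_scale2[OF f g])
  assume h: "h \<in> Vset"
  show "bilin_ext b (addV f g) h = addV (bilin_ext b f h) (bilin_ext b g h)" by (rule bilin_add1[OF f g h])
  show "bilin_ext b h (addV f g) = addV (bilin_ext b h f) (bilin_ext b h g)" by (rule bilin_add2[OF f g h])
qed

lemma V_tri: "V_is_triduplicial"
proof -
  have ids: "tridup_identities Vset precV circV succV"
    unfolding tridup_identities_def precV_def circV_def succV_def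
    by (intro ballI conjI; rule bilin_assoc; (assumption | rule pc_closed | rule pc_identities[symmetric] | rule pc_identities)?; assumption)
  show ?thesis unfolding V_is_triduplicial_def
    using zeroV_Vset addV_Vset scaleV_Vset ids
      op_props[of prec_pc, folded precV_def] op_props[of circ_pc, folded circV_def]
      op_props[of succ_pc, folded succV_def] pc_closed
    by auto
qed

lemma basis_op: "bilin_ext (opL k) (basisV A) (basisV B) = basisV (opL k A B)"
  by (rule bilin_basis)

lemma morph_op:
  assumes "V_morphism sc p c s \<psi>" "f \<in> Vset" "g \<in> Vset"
  shows "\<psi> (bilin_ext (opL k) f g) = opW p c s k (\<psi> f) (\<psi> g)"
  using assms by (cases k) (auto simp: V_morphism_def precV_def circV_def succV_def)

lemma morph_basis:
  assumes m: "V_morphism sc p c s \<psi>" and x: "\<psi> (basisV xx) = w"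
  shows "K \<in> schroeder_pc \<Longrightarrow> \<psi> (basisV K) = Ph p c s w K"
proof (induction "length K" arbitrary: K rule: less_induct)
  case less
  show ?case
  proof (cases "K = xx")
    case True thus ?thesis using x by (simp add: Ph_xx)
  next
    case False
    obtain k A B where d: "dec K = (k, A, B)" by (cases "dec K") auto
    have g: "good K (k, A, B)" using dec_good[OF less.prems False] d by simp
    note gl = good_len[OF g]
    have K: "K = opL k A B" using g by (simp add: good_def)
    have "\<psi> (basisV K) = \<psi> (bilin_ext (opL k) (basisV A) (basisV B))" using K basis_op by simp
    also have "\<dots> = opW p c s k (\<psi> (basisV A)) (\<psi> (basisV B))"
      using morph_op[OF m basis_Vset basis_Vset] gl by simp
    also have "\<dots> = opW p c s k (Ph p c s w A) (Ph p c s w B)" using less.hyps gl by simp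
    also have "\<dots> = Ph p c s w K" using Ph_dec[OF less.prems False d, where p=p and c=c and s=s and w=w] by (rule sym)
    finally show ?thesis .
  qed
qed

lemma morph_expand:
  assumes m: "V_morphism sc p c s \<psi>"
  shows "finite F \<Longrightarrow> v \<in> Vset \<Longrightarrow> supp v = F \<Longrightarrow> \<psi> v = (\<Sum>K\<in>F. sc (v K) (\<psi> (basisV K)))"
proof (induction F arbitrary: v rule: finite_induct)
  case empty
  have v0: "v = zeroV" using empty.prems by (auto simp: zeroV_def)
  have "addV zeroV zeroV = zeroV" by (simp add: addV_def zeroV_def)
  hence "\<psi> zeroV = \<psi> zeroV + \<psi> zeroV" using m zeroV_Vset unfolding V_morphism_def by metis
  thus ?case using v0 by simp
next
  case (insert K F)
  define v' where "v' = v(K := 0)"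
  have K: "K \<in> schroeder_pc" using insert.prems by (auto simp: Vset_iff)
  have sv': "supp v' = F" using insert.prems insert.hyps by (auto simp: v'_def)
  have v': "v' \<in> Vset" using insert.prems sv' insert.hyps by (auto simp: Vset_iff)
  have sb: "scaleV (v K) (basisV K) \<in> Vset" using scaleV_Vset basis_Vset K by blast
  have ve: "v = addV (scaleV (v K) (basisV K)) v'"
    by (auto simp: v'_def addV_def scaleV_def basisV_def)
  have "\<psi> v = \<psi> (scaleV (v K) (basisV K)) + \<psi> v'"
    using m sb v' ve unfolding V_morphism_def by metis
  also have "\<dots> = sc (v K) (\<psi> (basisV K)) + \<psi> v'"
    using m basis_Vset[OF K] unfolding V_morphism_def by simp
  also have "\<psi> v' = (\<Sum>K'\<in>F. sc (v' K') (\<psi> (basisV K')))"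
    by (rule insert.IH[OF v' sv'])
  also have "\<dots> = (\<Sum>K'\<in>F. sc (v K') (\<psi> (basisV K')))"
    using insert.hyps by (intro sum.cong refl) (auto simp: v'_def)
  finally show ?case using insert.hyps by simp
qed



theorem mainTheorem4:
  fixes sc :: "complex \<Rightarrow> 'w::ab_group_add \<Rightarrow> 'w"
    and p c s :: "'w \<Rightarrow> 'w \<Rightarrow> 'w" and w :: 'w
  shows "V_is_triduplicial \<and>
    (triduplicial_algebra sc p c s \<longrightarrow>
      (\<exists>\<phi>. V_morphism sc p c s \<phi> \<and> \<phi> (basisV [1,0,0]) = w \<and>
        (\<forall>\<psi>. V_morphism sc p c s \<psi> \<and> \<psi> (basisV [1,0,0]) = w \<longrightarrow>
              (\<forall>v\<in>Vset. \<psi> v = \<phi> v))))"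
proof (intro conjI impI)
  show "V_is_triduplicial" by (rule V_tri)
  assume TA: "triduplicial_algebra sc p c s"
  have vs: "vector_space sc" and bp: "bilinear_wrt sc p" and bc: "bilinear_wrt sc c"
    and bs: "bilinear_wrt sc s" and T: "tridup_identities UNIV p c s"
    using TA unfolding triduplicial_algebra_def by auto
  define \<phi> where "\<phi> = Tm sc (Ph p c s w)"
  have hP: "\<And>I J. I \<in> schroeder_pc \<Longrightarrow> J \<in> schroeder_pc \<Longrightarrow>
      Ph p c s w (prec_pc I J) = p (Ph p c s w I) (Ph p c s w J)"
    using key[OF T, where k=OP] by simp
  have hC: "\<And>I J. I \<in> schroeder_pc \<Longrightarrow> J \<in> schroeder_pc \<Longrightarrow>
      Ph p c s w (circ_pc I J) = c (Ph p c s w I) (Ph p c s w J)"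
    using key[OF T, where k=OC] by simp
  have hS: "\<And>I J. I \<in> schroeder_pc \<Longrightarrow> J \<in> schroeder_pc \<Longrightarrow>
      Ph p c s w (succ_pc I J) = s (Ph p c s w I) (Ph p c s w J)"
    using key[OF T, where k=OS] by simp
  have mP: "\<phi> (precV f g) = p (\<phi> f) (\<phi> g)" if "f \<in> Vset" "g \<in> Vset" for f g
    unfolding \<phi>_def precV_def
    by (rule T_bilin[OF vs that]) (use bp hP in \<open>auto simp: bilinear_wrt_def\<close>)
  have mC: "\<phi> (circV f g) = c (\<phi> f) (\<phi> g)" if "f \<in> Vset" "g \<in> Vset" for f g
    unfolding \<phi>_def circV_def
    by (rule T_bilin[OF vs that]) (use bc hC in \<open>auto simp: bilinear_wrt_def\<close>)
  have mS: "\<phi> (succV f g) = s (\<phi> f) (\<phi> g)" if "f \<in> Vset" "g \<in> Vset" for f g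
    unfolding \<phi>_def succV_def
    by (rule T_bilin[OF vs that]) (use bs hS in \<open>auto simp: bilinear_wrt_def\<close>)
  have morph: "V_morphism sc p c s \<phi>"
    unfolding V_morphism_def using mP mC mS T_add[OF vs] T_scale[OF vs] by (simp add: \<phi>_def)
  have bx: "\<phi> (basisV [1,0,0]) = w"
    unfolding \<phi>_def using T_basis[OF vs] Ph_xx by (simp add: xx_def)
  have uniq: "\<psi> v = \<phi> v" if m: "V_morphism sc p c s \<psi>" and x: "\<psi> (basisV [1,0,0]) = w"
    and v: "v \<in> Vset" for \<psi> v
  proof -
    have fin: "finite (supp v)" and sub: "supp v \<subseteq> schroeder_pc" using v by (auto simp: Vset_iff)
    have x': "\<psi> (basisV xx) = w" using x by (simp add: xx_def)
    have "\<psi> v = (\<Sum>K\<in>supp v. sc (v K) (\<psi> (basisV K)))" by (rule morph_expand[OF m fin v refl])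
    also have "\<dots> = (\<Sum>K\<in>supp v. sc (v K) (Ph p c s w K))"
      using morph_basis[OF m x'] sub by (intro sum.cong refl) auto
    also have "\<dots> = \<phi> v" by (simp add: \<phi>_def Tm_def)
    finally show ?thesis .
  qed
  show "\<exists>\<phi>. V_morphism sc p c s \<phi> \<and> \<phi> (basisV [1,0,0]) = w \<and>
        (\<forall>\<psi>. V_morphism sc p c s \<psi> \<and> \<psi> (basisV [1,0,0]) = w \<longrightarrow> (\<forall>v\<in>Vset. \<psi> v = \<phi> v))"
    using morph bx uniq by blast
qed


end
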